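(* Let $g\ge1$, $n=g+1$, $k\in\{1,\dots,g\}$, $\kappa_1,\dots,\kappa_n\in\mathbb C$ pairwise distinct and $\lambda_1,\dots,\lambda_g\in\mathbb C^*$. Let $\tilde A$ be the $k\times n$ matrix $\tilde A=V\cdot\mathrm{diag}(1,\lambda_1,\dots,\lambda_g)$, where $V_{ij}=\kappa_j^{\,i-1}$ ($i\in[k]$, $j\in[n]$). Then the matroid of $\tilde A$ is $\mathcal M_{\mathbf a,v_1}$ for every $\mathbf a\in[\mathbf k]$.
   Context: $B\in\mathbb Z^{g\times n}$ has $B_{i,1}=1$, $B_{i,i+1}=-1$, other entries $0$; $Q=BB^T$. $[\mathbf k]\subset\mathbb R^g$ is the set of vectors with entries in $\{-\tfrac{k}{g+1},\tfrac{g+1-k}{g+1}\}$ having $k$ or $k-1$ entries equal to $\tfrac{g+1-k}{g+1}$ (vertices of the Voronoi polytope of $Q$). For $\mathbf a\in[\mathbf k]$: $\mathcal D_{\mathbf a,Q}=\{\mathbf c\in\mathbb Z^g:\mathbf a^TQ\mathbf a=(\mathbf a-\mathbf c)^TQ(\mathbf a-\mathbf c)\}$; $\mathbf s_{\mathbf a}\in\{0,1\}^n$ has $j$-th entry $0$ if $(B^T\mathbf a)_j>0$ and $1$ if $(B^T\mathbf a)_j<0$; $\mathcal M_{\mathbf a,v_1}$ is the matroid on $[n]$ with bases $\{I,|I|=k:\exists\mathbf c\in\mathcal D_{\mathbf a,Q},\ (B^T\mathbf c+\mathbf s_{\mathbf a})_i=1\ \forall i\in I\}$. The matroid of a $k\times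 n$ matrix has as bases the $k$-subsets of columns with nonzero maximal minor. *)

theory Defs
  imports Complex_Main "Jordan_Normal_Form.Determinant" "Jordan_Normal_Form.DL_Submatrix"
begin

(* All vectors/matrices of the paper are 1-indexed; we model them as functions on nat
   and only ever look at indices in {1..g} resp. {1..n}, n = g+1. *)

definition Bmat :: "nat \<Rightarrow> nat \<Rightarrow> nat \<Rightarrow> int" where
  "Bmat g i j = (if 1 \<le> i \<and> i \<le> g \<and> 1 \<le> j \<and> j \<le> g + 1 then
       (if j = 1 then 1 else if j = i + 1 then -1 else 0) else 0)"

definition Qmat :: "nat \<Rightarrow> nat \<Rightarrow> nat \<Rightarrow> int" where
  "Qmat g i j = (\<Sum>l = 1..g+1. Bmat g i l * Bmat g j l)"

definition qform :: "nat \<Rightarrow> (nat \<Rightarrow> real) \<Rightarrow> real" where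
  "qform g x = (\<Sum>i = 1..g. \<Sum>j = 1..g. x i * of_int (Qmat g i j) * x j)"

definition BT :: "nat \<Rightarrow> (nat \<Rightarrow> real) \<Rightarrow> nat \<Rightarrow> real" where
  "BT g x j = (\<Sum>i = 1..g. of_int (Bmat g i j) * x i)"

definition kset :: "nat \<Rightarrow> nat \<Rightarrow> (nat \<Rightarrow> real) set" where
  "kset g k = {a. (\<forall>i. i \<notin> {1..g} \<longrightarrow> a i = 0)
      \<and> (\<forall>i\<in>{1..g}. a i = - real k / real (g + 1) \<or> a i = real (g + 1 - k) / real (g + 1))
      \<and> card {i\<in>{1..g}. a i = real (g + 1 - k) / real (g + 1)} \<in> {k, k - 1}}"

definition Dset :: "nat \<Rightarrow> (nat \<Rightarrow> real) \<Rightarrow> (nat \<Rightarrow> int) set" where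
  "Dset g a = {c. (\<forall>i. i \<notin> {1..g} \<longrightarrow> c i = 0)
      \<and> qform g a = qform g (\<lambda>i. a i - of_int (c i))}"

(* s_a in {0,1}^n; (B^T a)_j is never 0 for a in [k] *)
definition svec :: "nat \<Rightarrow> (nat \<Rightarrow> real) \<Rightarrow> nat \<Rightarrow> real" where
  "svec g a j = (if BT g a j > 0 then 0 else 1)"

definition Mbases :: "nat \<Rightarrow> nat \<Rightarrow> (nat \<Rightarrow> real) \<Rightarrow> nat set set" where
  "Mbases g k a = {I. I \<subseteq> {1..g+1} \<and> card I = k \<and>
      (\<exists>c\<in>Dset g a. \<forall>i\<in>I. BT g (\<lambda>l. of_int (c l)) i + svec g a i = 1)}"

(* bases of the matroid of a k x n matrix, ground set [n] = {1..n}
   (column j of the paper is column j-1 of the 0-indexed JNF matrix) *)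
definition matrix_bases :: "'a::comm_ring_1 mat \<Rightarrow> nat set set" where
  "matrix_bases A = {I. I \<subseteq> {1..dim_col A} \<and> card I = dim_row A \<and>
      det (submatrix A UNIV ((\<lambda>j. j - 1) ` I)) \<noteq> 0}"

definition Atilde :: "nat \<Rightarrow> nat \<Rightarrow> (nat \<Rightarrow> complex) \<Rightarrow> (nat \<Rightarrow> complex) \<Rightarrow> complex mat" where
  "Atilde g k \<kappa> lam = mat k (g + 1)
     (\<lambda>(i, j). \<kappa> (j + 1) ^ i * (if j = 0 then 1 else lam j))"

end

theory Submission
  imports Defs "HOL-Computational_Algebra.Polynomial"
begin

lemma vdm_det_nz:
  fixes x d :: "nat \<Rightarrow> complex"
  assumes inj: "inj_on x {..<k}" and d: "\<forall>j<k. d j \<noteq> 0"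
  shows "det (mat k k (\<lambda>(i,j). x j ^ i * d j)) \<noteq> 0"
proof
  define M where "M = mat k k (\<lambda>(i,j). x j ^ i * d j)"
  assume "det (mat k k (\<lambda>(i,j). x j ^ i * d j)) = 0"
  hence "det (transpose_mat M) = 0" unfolding M_def by (subst det_transpose) auto
  then obtain v where v: "v \<in> carrier_vec k" "v \<noteq> 0\<^sub>v k" "transpose_mat M *\<^sub>v v = 0\<^sub>v k"
    using det_0_iff_vec_prod_zero[of "transpose_mat M" k] unfolding M_def by auto
  define p where "p = (\<Sum>i<k. monom (v $ i) i)"
  have pe: "poly p z = (\<Sum>i<k. v $ i * z ^ i)" for z
    unfolding p_def by (simp add: poly_sum poly_monom)
  have root: "poly p (x j) = 0" if "j < k" for j
  proof -
    have "(transpose_mat M *\<^sub>v v) $ j = 0" using v(3) that by simp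
    hence "(\<Sum>i<k. x j ^ i * d j * v $ i) = 0"
      using that v(1) unfolding M_def
      by (simp add: mult_mat_vec_def scalar_prod_def row_def atLeast0LessThan)
    hence "d j * poly p (x j) = 0" unfolding pe
      by (simp add: sum_distrib_left mult.commute mult.left_commute)
    thus ?thesis using d that by simp
  qed
  have degp: "degree p < k" if "k > 0"
  proof -
    have "degree p \<le> k - 1" unfolding p_def
      by (rule degree_sum_le) (use that in \<open>auto intro: order.trans[OF degree_monom_le]\<close>)
    thus ?thesis using that by linarith
  qed
  have "p = 0"
  proof (cases "k = 0")
    case True thus ?thesis unfolding p_def by simp
  next
    case False
    show ?thesis
    proof (rule poly_eqI_degree[of "x ` {..<k}"])
      show "card (x ` {..<k}) > degree p" using degp False card_image[OF inj] by simp
      show "card (x ` {..<k}) > degree (0::complex poly)" using False card_image[OF inj] by simp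
    qed (use root in auto)
  qed
  hence c0: "coeff p i = 0" for i by simp
  have c: "coeff p i = (if i < k then v $ i else 0)" for i
    unfolding p_def by (simp add: coeff_sum)
  have "v $ i = 0" if "i < k" for i
    using c[of i] c0[of i] that by simp
  hence "v = 0\<^sub>v k" using v(1) by (intro eq_vecI) auto
  thus False using v(2) by simp
qed

lemma atilde_bases:
  fixes g k :: nat and \<kappa> lam :: "nat \<Rightarrow> complex"
  assumes "k \<le> g" and inj: "inj_on \<kappa> {1..g+1}" and lam: "\<forall>i\<in>{1..g}. lam i \<noteq> 0"
  shows "matrix_bases (Atilde g k \<kappa> lam) = {I. I \<subseteq> {1..g+1} \<and> card I = k}"
proof -
  have dims: "dim_row (Atilde g k \<kappa> lam) = k" "dim_col (Atilde g k \<kappa> lam) = g + 1"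
    unfolding Atilde_def by auto
  have "det (submatrix (Atilde g k \<kappa> lam) UNIV ((\<lambda>j. j - 1) ` I)) \<noteq> 0"
    if I: "I \<subseteq> {1..g+1}" "card I = k" for I
  proof -
    define J where "J = (\<lambda>j. j - 1) ` I"
    have injI: "inj_on (\<lambda>j. j - 1) I" by (rule inj_onI) (use I(1) in \<open>auto dest!: subsetD[OF I(1)]\<close>)
    have cJ: "card J = k" unfolding J_def using card_image[OF injI] I by simp
    have Jsub: "J \<subseteq> {..<g+1}" unfolding J_def using I(1) by (auto dest!: subsetD[OF I(1)])
    have cJ': "{j. j < g + 1 \<and> j \<in> J} = J" using Jsub by auto
    have cJ2: "card {j. j < Suc g \<and> j \<in> J} = k" using cJ' cJ by simp
    have pk: "pick J j \<in> J" if "j < k" for j using pick_in_set_le[of j J] that cJ by simp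
    have eq: "submatrix (Atilde g k \<kappa> lam) UNIV J =
      mat k k (\<lambda>(i,j). \<kappa> (pick J j + 1) ^ i * (if pick J j = 0 then 1 else lam (pick J j)))"
    proof (rule eq_matI)
      show "dim_row (submatrix (Atilde g k \<kappa> lam) UNIV J) = dim_row (mat k k (\<lambda>(i,j). \<kappa> (pick J j + 1) ^ i * (if pick J j = 0 then 1 else lam (pick J j))))"
        by (simp add: dim_submatrix dims)
      show "dim_col (submatrix (Atilde g k \<kappa> lam) UNIV J) = dim_col (mat k k (\<lambda>(i,j). \<kappa> (pick J j + 1) ^ i * (if pick J j = 0 then 1 else lam (pick J j))))"
        by (simp add: dim_submatrix dims cJ2)
      fix i j assume ij: "i < dim_row (mat k k (\<lambda>(i,j). \<kappa> (pick J j + 1) ^ i * (if pick J j = 0 then 1 else lam (pick J j))))"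
        "j < dim_col (mat k k (\<lambda>(i,j). \<kappa> (pick J j + 1) ^ i * (if pick J j = 0 then 1 else lam (pick J j))))"
      hence ij': "i < k" "j < k" by auto
      have "pick J j < g + 1" using pk[OF ij'(2)] Jsub by auto
      thus "submatrix (Atilde g k \<kappa> lam) UNIV J $$ (i, j) = mat k k (\<lambda>(i,j). \<kappa> (pick J j + 1) ^ i * (if pick J j = 0 then 1 else lam (pick J j))) $$ (i, j)"
        using ij' by (subst submatrix_index) (auto simp: dims cJ2 pick_UNIV Atilde_def)
    qed
    have "det (mat k k (\<lambda>(i,j). \<kappa> (pick J j + 1) ^ i * (if pick J j = 0 then 1 else lam (pick J j)))) \<noteq> 0"
    proof (rule vdm_det_nz)
      show "inj_on (\<lambda>j. \<kappa> (pick J j + 1)) {..<k}"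
      proof (rule inj_onI)
        fix x y assume xy: "x \<in> {..<k}" "y \<in> {..<k}" "\<kappa> (pick J x + 1) = \<kappa> (pick J y + 1)"
        have "pick J x + 1 \<in> {1..g+1}" "pick J y + 1 \<in> {1..g+1}" using pk[of x] pk[of y] xy Jsub by auto
        hence "pick J x = pick J y" using inj xy(3) by (auto dest: inj_onD)
        show "x = y"
        proof (rule ccontr)
          assume "x \<noteq> y"
          hence "x < y \<or> y < x" by arith
          thus False using pick_mono_le[of x J y] pick_mono_le[of y J x] xy cJ \<open>pick J x = pick J y\<close> by auto
        qed
      qed
      show "\<forall>j<k. (if pick J j = 0 then 1 else lam (pick J j)) \<noteq> 0"
      proof (intro allI impI)
        fix j assume "j < k"
        hence "pick J j \<in> J" by (rule pk)
        hence "pick J j \<le> g" using Jsub by auto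
        thus "(if pick J j = 0 then 1 else lam (pick J j)) \<noteq> 0" using lam by auto
      qed
    qed
    thus ?thesis using eq unfolding J_def by simp
  qed
  thus ?thesis unfolding matrix_bases_def dims by auto
qed

lemma BT_1: "BT g x 1 = (\<Sum>i=1..g. x i)"
  unfolding BT_def Bmat_def by (intro sum.cong) auto

lemma BT_Suc: assumes "1 \<le> j" "j \<le> g" shows "BT g x (Suc j) = - x j"
proof -
  have "BT g x (Suc j) = (\<Sum>i=1..g. (if i = j then - x i else 0))"
    unfolding BT_def Bmat_def using assms by (intro sum.cong) auto
  also have "\<dots> = - x j" using assms by (simp add: sum.delta)
  finally show ?thesis .
qed

lemma BT_diff: "BT g (\<lambda>i. x i - y i) j = BT g x j - BT g y j"
  unfolding BT_def by (simp add: algebra_simps sum_subtractf)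

lemma qform_BT: "qform g x = (\<Sum>l=1..g+1. (BT g x l)^2)"
proof -
  have "qform g x = (\<Sum>i=1..g. \<Sum>j=1..g. \<Sum>l=1..g+1. (of_int (Bmat g i l) * x i) * (of_int (Bmat g j l) * x j))"
    unfolding qform_def Qmat_def
    by (simp add: sum_distrib_left sum_distrib_right algebra_simps)
  also have "\<dots> = (\<Sum>i=1..g. \<Sum>l=1..g+1. \<Sum>j=1..g. (of_int (Bmat g i l) * x i) * (of_int (Bmat g j l) * x j))"
    by (intro sum.cong refl sum.swap)
  also have "\<dots> = (\<Sum>l=1..g+1. \<Sum>i=1..g. \<Sum>j=1..g. (of_int (Bmat g i l) * x i) * (of_int (Bmat g j l) * x j))"
    by (rule sum.swap)
  also have "\<dots> = (\<Sum>l=1..g+1. (BT g x l)^2)"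
    unfolding BT_def power2_eq_square sum_product by simp
  finally show ?thesis .
qed

lemma sum_ind: "finite A \<Longrightarrow> S \<subseteq> A \<Longrightarrow> (\<Sum>j\<in>A. (if j \<in> S then 1 else 0) :: 'a::comm_ring_1) = of_nat (card S)"
  by (simp add: sum.If_cases Int_absorb1)

lemma sq_sum:
  fixes \<alpha> :: real
  assumes "S \<subseteq> {1..n}"
  shows "(\<Sum>j=1..n. (\<alpha> - (if j \<in> S then 1 else 0))^2) = real n * \<alpha>^2 - 2 * \<alpha> * real (card S) + real (card S)"
proof -
  have "(\<Sum>j=1..n. (\<alpha> - (if j \<in> S then 1 else 0))^2) = (\<Sum>j=1..n. \<alpha>^2 - 2 * \<alpha> * (if j \<in> S then 1 else 0) + (if j \<in> S then 1 else 0))"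
    by (intro sum.cong) (auto simp: power2_eq_square algebra_simps)
  also have "\<dots> = real n * \<alpha>^2 - 2 * \<alpha> * (\<Sum>j=1..n. (if j \<in> S then 1 else 0)) + (\<Sum>j=1..n. (if j \<in> S then 1 else 0))"
    by (simp add: sum.distrib sum_subtractf sum_distrib_left)
  also have "\<dots> = real n * \<alpha>^2 - 2 * \<alpha> * real (card S) + real (card S)"
    using sum_ind[OF _ assms, where 'a=real] by simp
  finally show ?thesis .
qed

lemma Mbases_all:
  assumes g1: "g \<ge> 1" and k1: "1 \<le> k" and kg: "k \<le> g" and a: "a \<in> kset g k"
  shows "Mbases g k a = {I. I \<subseteq> {1..g+1} \<and> card I = k}"
proof -
  define \<alpha> where "\<alpha> = real k / real (g + 1)"
  have \<alpha>0: "\<alpha> > 0" and \<alpha>1: "\<alpha> < 1" unfolding \<alpha>_def using k1 kg by auto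
  have beta: "real (g + 1 - k) / real (g + 1) = 1 - \<alpha>"
    unfolding \<alpha>_def using kg by (simp add: of_nat_diff field_simps)
  define P where "P = {i\<in>{1..g}. a i = 1 - \<alpha>}"
  define m where "m = card P"
  have a0: "\<forall>i. i \<notin> {1..g} \<longrightarrow> a i = 0"
    and a1: "\<forall>i\<in>{1..g}. a i = - \<alpha> \<or> a i = 1 - \<alpha>"
    and a2: "m = k \<or> m = k - 1"
  proof -
    have neg: "- real k / real (g + 1) = - \<alpha>" unfolding \<alpha>_def by simp
    have "(\<forall>i. i \<notin> {1..g} \<longrightarrow> a i = 0) \<and> (\<forall>i\<in>{1..g}. a i = - \<alpha> \<or> a i = 1 - \<alpha>) \<and> card P \<in> {k, k - 1}"
      using a unfolding kset_def beta neg P_def by blast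
    thus "\<forall>i. i \<notin> {1..g} \<longrightarrow> a i = 0" "\<forall>i\<in>{1..g}. a i = - \<alpha> \<or> a i = 1 - \<alpha>" "m = k \<or> m = k - 1"
      unfolding m_def by auto
  qed
  have Psub: "P \<subseteq> {1..g}" unfolding P_def by auto
  have ai: "a i = (if i \<in> P then 1 else 0) - \<alpha>" if "i \<in> {1..g}" for i
    using a1 that \<alpha>0 \<alpha>1 unfolding P_def by auto
  define N where "N = (if m = k then {} else {1}) \<union> Suc ` P"
  have Nsub: "N \<subseteq> {1..g+1}" unfolding N_def using Psub by auto
  have sumA: "(\<Sum>i=1..g. a i) = real m - real g * \<alpha>"
  proof -
    have "(\<Sum>i=1..g. a i) = (\<Sum>i=1..g. (if i \<in> P then 1 else 0) - \<alpha>)"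
      by (intro sum.cong) (auto simp: ai)
    also have "\<dots> = real m - real g * \<alpha>"
      using sum_ind[OF _ Psub, where 'a=real] unfolding m_def by (simp add: sum_subtractf)
    finally show ?thesis .
  qed
  have y: "BT g a j = \<alpha> - (if j \<in> N then 1 else 0)" if j: "j \<in> {1..g+1}" for j
  proof (cases "j = 1")
    case True
    have n1: "1 \<notin> Suc ` P" using Psub by auto
    show ?thesis
    proof (cases "m = k")
      case True
      have "real m - real g * \<alpha> = \<alpha>" unfolding \<alpha>_def True by (simp add: field_simps)
      thus ?thesis using \<open>j = 1\<close> BT_1 sumA n1 True unfolding N_def by simp
    next
      case False
      hence mk: "real m = real k - 1" using a2 k1 by auto
      have "real m - real g * \<alpha> = \<alpha> - 1" unfolding \<alpha>_def mk by (simp add: field_simps)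
      thus ?thesis using \<open>j = 1\<close> BT_1 sumA False unfolding N_def by simp
    qed
  next
    case False
    then obtain j' where j': "j = Suc j'" "1 \<le> j'" "j' \<le> g" using j
    proof -
      show ?thesis using j False by (intro that[of "j - 1"]) auto
    qed
    have "j \<in> N \<longleftrightarrow> j' \<in> P" unfolding N_def using j' by auto
    thus ?thesis using BT_Suc[OF j'(2,3)] ai[of j'] j' by auto
  qed
  have cardN: "card N = k"
  proof (cases "m = k")
    case True thus ?thesis unfolding N_def m_def by (simp add: card_image)
  next
    case False
    have "1 \<notin> Suc ` P" using Psub by auto
    moreover have "finite P" using Psub finite_subset by blast
    ultimately have "card N = Suc m" unfolding N_def using False by (simp add: card_image m_def)
    thus ?thesis using False a2 k1 by auto
  qed
  have sv: "svec g a j = (if j \<in> N then 1 else 0)" if "j \<in> {1..g+1}" for j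
    using y[OF that] \<alpha>0 \<alpha>1 unfolding svec_def by auto
  have "I \<in> Mbases g k a" if I: "I \<subseteq> {1..g+1}" "card I = k" for I
  proof -
    define z :: "nat \<Rightarrow> int" where "z j = (if j \<in> I then 1 else 0) - (if j \<in> N then 1 else 0)" for j
    define c :: "nat \<Rightarrow> int" where "c i = (if i \<in> {1..g} then - z (Suc i) else 0)" for i
    have sumz: "(\<Sum>j=1..g+1. z j) = 0"
      unfolding z_def using sum_ind[OF _ I(1), where 'a=int] sum_ind[OF _ Nsub, where 'a=int] I(2) cardN
      by (simp add: sum_subtractf)
    have sumz2: "(\<Sum>j=1..g+1. z j) = z 1 + (\<Sum>i=1..g. z (Suc i))"
    proof -
      have "(\<Sum>j=1..g+1. z j) = z 1 + (\<Sum>j=Suc 1..Suc g. z j)"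
        by (subst sum.atLeast_Suc_atMost) auto
      also have "(\<Sum>j=Suc 1..Suc g. z j) = (\<Sum>i=1..g. z (Suc i))"
        by (rule sum.shift_bounds_cl_Suc_ivl)
      finally show ?thesis .
    qed
    have BTc: "BT g (\<lambda>l. of_int (c l)) j = of_int (z j)" if j: "j \<in> {1..g+1}" for j
    proof (cases "j = 1")
      case True
      have "BT g (\<lambda>l. of_int (c l)) 1 = (\<Sum>i=1..g. of_int (- z (Suc i)))"
        unfolding BT_1 c_def by (intro sum.cong) auto
      also have "\<dots> = of_int (z 1)" using sumz sumz2
      proof -
        have "(\<Sum>i=1..g. z (Suc i)) = - z 1" using sumz sumz2 by simp
        hence "(\<Sum>i=1..g. of_int (z (Suc i)) :: real) = - of_int (z 1)"
          by (metis of_int_sum of_int_minus)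
        thus ?thesis by (simp add: sum_negf)
      qed
      finally show ?thesis using True by simp
    next
      case False
      then obtain j' where j': "j = Suc j'" "1 \<le> j'" "j' \<le> g" using j
      proof -
      show ?thesis using j False by (intro that[of "j - 1"]) auto
    qed
      show ?thesis using BT_Suc[OF j'(2,3)] j' unfolding c_def by simp
    qed
    have "c \<in> Dset g a"
    proof -
      have "qform g (\<lambda>i. a i - of_int (c i)) = (\<Sum>j=1..g+1. (\<alpha> - (if j \<in> I then 1 else 0))^2)"
        unfolding qform_BT BT_diff
        by (intro sum.cong refl) (simp add: y BTc z_def)
      also have "\<dots> = (\<Sum>j=1..g+1. (\<alpha> - (if j \<in> N then 1 else 0))^2)"
        using sq_sum[OF I(1)] sq_sum[OF Nsub] I(2) cardN by simp
      also have "\<dots> = qform g a"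
        unfolding qform_BT by (intro sum.cong refl) (simp add: y)
      finally show ?thesis unfolding Dset_def c_def by auto
    qed
    moreover have "\<forall>i\<in>I. BT g (\<lambda>l. of_int (c l)) i + svec g a i = 1"
      using I(1) BTc sv unfolding z_def by auto
    ultimately show ?thesis unfolding Mbases_def using I by blast
  qed
  thus ?thesis unfolding Mbases_def by blast
qed

theorem proposition5p6:
  fixes g k :: nat and \<kappa> lam :: "nat \<Rightarrow> complex" and a :: "nat \<Rightarrow> real"
  assumes "g \<ge> 1" and "1 \<le> k" and "k \<le> g"
    and "inj_on \<kappa> {1..g+1}"
    and "\<forall>i\<in>{1..g}. lam i \<noteq> 0"
    and "a \<in> kset g k"
  shows "matrix_bases (Atilde g k \<kappa> lam) = Mbases g k a"
  using atilde_bases[OF assms(3,4,5)] Mbases_all[OF assms(1,2,3,6)] by simp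

end
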